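(* Let $(A,W)$ be a $T_1$ Pratt comonoid such that $W$ is closed under complementation (i.e., $x\in W$ implies $A-x\in W$). Then $(A,W)$ is discrete, i.e., $W$ is the set of all subsets of $A$.
   Context: A Pratt comonoid is a pair $(A,W)$ where $A$ is a set and $W$ is a set of subsets of $A$ such that (i) $\emptyset\in W$ and $A\in W$; (ii) whenever $C\subseteq A\times A$ is such that for every $a\in A$ both the $a$-th row $\{b\mid (a,b)\in C\}$ and the $a$-th column $\{b\mid (b,a)\in C\}$ belong to $W$ (such a $C$ is called a crossword over $W$), the diagonal $\{b\mid (b,b)\in C\}$ also belongs to $W$. $(A,W)$ is called $T_1$ if for all distinct $a,b\in A$ there is an element of $W$ containing $a$ but not $b$. It is called discrete if $W$ is the full power set of $A$. *)

theory Defs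
  imports Main
begin

definition crossword :: "'a set \<Rightarrow> 'a set set \<Rightarrow> ('a \<times> 'a) set \<Rightarrow> bool" where
  "crossword A W C \<longleftrightarrow> C \<subseteq> A \<times> A \<and>
     (\<forall>a\<in>A. {b. (a, b) \<in> C} \<in> W \<and> {b. (b, a) \<in> C} \<in> W)"

definition pratt_comonoid :: "'a set \<Rightarrow> 'a set set \<Rightarrow> bool" where
  "pratt_comonoid A W \<longleftrightarrow> W \<subseteq> Pow A \<and> {} \<in> W \<and> A \<in> W \<and>
     (\<forall>C. crossword A W C \<longrightarrow> {b. (b, b) \<in> C} \<in> W)"

definition T1_comonoid :: "'a set \<Rightarrow> 'a set set \<Rightarrow> bool" where
  "T1_comonoid A W \<longleftrightarrow> (\<forall>a\<in>A. \<forall>b\<in>A. a \<noteq> b \<longrightarrow> (\<exists>x\<in>W. a \<in> x \<and> b \<notin> x))"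

definition discrete_comonoid :: "'a set \<Rightarrow> 'a set set \<Rightarrow> bool" where
  "discrete_comonoid A W \<longleftrightarrow> W = Pow A"

end

theory Submission
  imports Defs
begin

lemma disj_union_in:
  assumes P: "pratt_comonoid A W" and DW: "D \<subseteq> W"
    and disj: "\<forall>U\<in>D. \<forall>V\<in>D. U \<noteq> V \<longrightarrow> U \<inter> V = {}"
  shows "\<Union>D \<in> W"
proof -
  have WP: "W \<subseteq> Pow A" and E: "{} \<in> W" and cw: "\<forall>C. crossword A W C \<longrightarrow> {b. (b, b) \<in> C} \<in> W"
    using P unfolding pratt_comonoid_def by auto
  define C where "C = (\<Union>U\<in>D. U \<times> U)"
  have row: "{b. (x, b) \<in> C} \<in> W" for x
  proof (cases "\<exists>U\<in>D. x \<in> U")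
    case True
    then obtain U where U: "U \<in> D" "x \<in> U" by blast
    have "{b. (x, b) \<in> C} = U" using U disj unfolding C_def by blast
    then show ?thesis using U DW by auto
  next
    case False
    then have "{b. (x, b) \<in> C} = {}" unfolding C_def by blast
    then show ?thesis using E by simp
  qed
  have col: "{b. (b, x) \<in> C} \<in> W" for x
  proof (cases "\<exists>U\<in>D. x \<in> U")
    case True
    then obtain U where U: "U \<in> D" "x \<in> U" by blast
    have "{b. (b, x) \<in> C} = U" using U disj unfolding C_def by blast
    then show ?thesis using U DW by auto
  next
    case False
    then have "{b. (b, x) \<in> C} = {}" unfolding C_def by blast
    then show ?thesis using E by simp
  qed
  have "C \<subseteq> A \<times> A" using DW WP unfolding C_def by blast
  then have "crossword A W C" using row col unfolding crossword_def by blast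
  then have "{b. (b, b) \<in> C} \<in> W" using cw by blast
  moreover have "{b. (b, b) \<in> C} = \<Union>D" unfolding C_def by blast
  ultimately show ?thesis by simp
qed

lemma inter_in:
  assumes P: "pratt_comonoid A W" and "U \<in> W" "V \<in> W"
  shows "U \<inter> V \<in> W"
proof -
  have WP: "W \<subseteq> Pow A" and E: "{} \<in> W" and cw: "\<forall>C. crossword A W C \<longrightarrow> {b. (b, b) \<in> C} \<in> W"
    using P unfolding pratt_comonoid_def by auto
  have "crossword A W (U \<times> V)"
    unfolding crossword_def
  proof (intro conjI ballI)
    show "U \<times> V \<subseteq> A \<times> A" using assms WP by blast
  next
    fix a assume "a \<in> A"
    show "{b. (a, b) \<in> U \<times> V} \<in> W"
      by (cases "a \<in> U") (use assms E in auto)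
    show "{b. (b, a) \<in> U \<times> V} \<in> W"
      by (cases "a \<in> V") (use assms E in auto)
  qed
  then have "{b. (b, b) \<in> U \<times> V} \<in> W" using cw by blast
  moreover have "{b. (b, b) \<in> U \<times> V} = U \<inter> V" by blast
  ultimately show ?thesis by simp
qed

theorem theorem4p4:
  fixes A :: "'a set" and W :: "'a set set"
  assumes "pratt_comonoid A W"
    and "T1_comonoid A W"
    and "\<forall>x\<in>W. A - x \<in> W"
  shows "discrete_comonoid A W"
proof -
  note P = assms(1)
  have WP: "W \<subseteq> Pow A" and AW: "A \<in> W"
    using P unfolding pratt_comonoid_def by auto
  have single: "{a} \<in> W" if aA: "a \<in> A" for a
  proof -
    define F where "F = {D. D \<subseteq> W \<and> (\<forall>U\<in>D. a \<notin> U) \<and> (\<forall>U\<in>D. \<forall>V\<in>D. U \<noteq> V \<longrightarrow> U \<inter> V = {})}"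
    have "\<forall>C\<in>chains F. \<Union>C \<in> F"
    proof
      fix C assume C: "C \<in> chains F"
      have sub: "C \<subseteq> F" using C by (rule chainsD2)
      have cmp: "X \<subseteq> Y \<or> Y \<subseteq> X" if "X \<in> C" "Y \<in> C" for X Y
        using chainsD[OF C that] .
      show "\<Union>C \<in> F"
        unfolding F_def
      proof (intro CollectI conjI ballI impI)
        show "\<Union>C \<subseteq> W" using sub unfolding F_def by blast
      next
        fix U assume "U \<in> \<Union>C" then show "a \<notin> U" using sub unfolding F_def by blast
      next
        fix U V assume U: "U \<in> \<Union>C" and V: "V \<in> \<Union>C" and ne: "U \<noteq> V"
        from U obtain X where X: "X \<in> C" "U \<in> X" by blast
        from V obtain Y where Y: "Y \<in> C" "V \<in> Y" by blast
        from cmp[OF X(1) Y(1)] show "U \<inter> V = {}"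
        proof
          assume "X \<subseteq> Y" then show ?thesis using X Y sub ne unfolding F_def by blast
        next
          assume "Y \<subseteq> X" then show ?thesis using X Y sub ne unfolding F_def by blast
        qed
      qed
    qed
    from Zorn_Lemma[OF this] obtain M where M: "M \<in> F" and max: "\<forall>X\<in>F. M \<subseteq> X \<longrightarrow> X = M"
      by blast
    have MW: "M \<subseteq> W" and Ma: "\<forall>U\<in>M. a \<notin> U"
      and Md: "\<forall>U\<in>M. \<forall>V\<in>M. U \<noteq> V \<longrightarrow> U \<inter> V = {}"
      using M unfolding F_def by auto
    have UM: "\<Union>M \<in> W" using disj_union_in[OF P MW Md] .
    have eq: "\<Union>M = A - {a}"
    proof
      show "\<Union>M \<subseteq> A - {a}" using MW WP Ma by blast
    next
      show "A - {a} \<subseteq> \<Union>M"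
      proof
        fix y assume y: "y \<in> A - {a}"
        show "y \<in> \<Union>M"
        proof (rule ccontr)
          assume ny: "y \<notin> \<Union>M"
          obtain x where x: "x \<in> W" "y \<in> x" "a \<notin> x"
            using assms(2) y aA unfolding T1_comonoid_def by blast
          have c: "A - \<Union>M \<in> W" using assms(3) UM by blast
          have xn: "x \<inter> (A - \<Union>M) \<in> W" using inter_in[OF P x(1) c] .
          define N where "N = insert (x \<inter> (A - \<Union>M)) M"
          have "N \<in> F" unfolding F_def N_def using MW Ma Md xn x(3) by blast
          moreover have "M \<subseteq> N" unfolding N_def by blast
          ultimately have "N = M" using max by blast
          then have "x \<inter> (A - \<Union>M) \<in> M" unfolding N_def by blast
          moreover have "y \<in> x \<inter> (A - \<Union>M)" using x y ny by blast
          ultimately show False using ny by blast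
        qed
      qed
    qed
    have "A - (A - {a}) \<in> W" using assms(3) UM eq by simp
    moreover have "A - (A - {a}) = {a}" using aA by blast
    ultimately show ?thesis by simp
  qed
  have "Pow A \<subseteq> W"
  proof
    fix S assume S: "S \<in> Pow A"
    define D where "D = (\<lambda>s. {s}) ` S"
    have "D \<subseteq> W" using S single unfolding D_def by blast
    moreover have "\<forall>U\<in>D. \<forall>V\<in>D. U \<noteq> V \<longrightarrow> U \<inter> V = {}" unfolding D_def by blast
    ultimately have "\<Union>D \<in> W" using disj_union_in[OF P] by blast
    moreover have "\<Union>D = S" unfolding D_def by blast
    ultimately show "S \<in> W" by simp
  qed
  then show ?thesis using WP unfolding discrete_comonoid_def by blast
qed

end
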